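(* Fix an integer $d\ge 2$ and $\theta>0$. For the public goods game described in the context, with arbitrary real parameters $\mu_b,\mu_c,\sigma_b^2,\sigma_c^2,\sigma_{bc}$, we have $F>0$ if and only if $\sigma_{bc}-\sigma_c^2>2\mu_c$. In particular, this condition does not depend on $\theta$ or $d$. Moreover, $F$ is strictly decreasing in $\sigma_c^2$ and strictly increasing in $\sigma_{bc}$ when the other parameters are held fixed.
   Context: For integers $0\le k\le n$ and $\theta>0$ let $\psi_n^k=\frac{\prod_{i=1}^{k}(\theta+i-1)\prod_{j=1}^{n-k}(\theta+j-1)}{\prod_{l=1}^{n}(2\theta+l-1)}$ (empty products equal $1$). For real arrays $\mu_{C,k},\mu_{D,k},\sigma_{CC,kl},\sigma_{CD,kl},\sigma_{DD,kl}$ ($k,l=0,\ldots,d-1$) define $$F=\sum_{k=0}^{d-1}\binom{d-1}{k}\psi_{d+1}^{k+1}(\mu_{C,k}-\mu_{D,k})+\sum_{k,l=0}^{d-1}\binom{d-1}{k}\binom{d-1}{l}\Big[-\psi_{2d+1}^{k+l+2}(\sigma_{CC,kl}-\sigma_{CD,kl})+\psi_{2d+1}^{k+l+1}(\sigma_{DD,kl}-\sigma_{CD,kl})\Big].$$ Here $\mu_{C,k},\mu_{D,k}$ are the scaled means of the payoffs $a_k$ to a cooperator and $b_k$ to a defector having $k$ cooperating partners among $d-1$ in a group of size $d$, and $\sigma_{CC,kl},\sigma_{CD,kl},\sigma_{DD,kl}$ are the scaled second moments of $a_ka_l$, $a_kb_l$, $b_kb_l$ (each such expectation equals the scaled quantity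 times $\delta$ plus $o(\delta)$). In the paper's large-population weak-selection approximation, the average abundance of $C$ is $\tfrac12+\tfrac{\delta(1-u)}{u}F$, so weak selection favors the abundance of $C$ iff $F>0$. Public goods game: with random benefit $b$ and cost $c$ satisfying $E[b]=\mu_b\delta+o(\delta)$, $E[c]=\mu_c\delta+o(\delta)$, $E[b^2]=\sigma_b^2\delta+o(\delta)$, $E[c^2]=\sigma_c^2\delta+o(\delta)$, $E[bc]=\sigma_{bc}\delta+o(\delta)$, the payoffs are $a_k=\frac{k}{d-1}b-c$ and $b_k=\frac{k}{d-1}b$. Hence $\mu_{C,k}=\frac{k}{d-1}\mu_b-\mu_c$, $\mu_{D,k}=\frac{k}{d-1}\mu_b$, $\sigma_{CC,kl}=\frac{kl}{(d-1)^2}\sigma_b^2+\sigma_c^2-\frac{k+l}{d-1}\sigma_{bc}$, $\sigma_{CD,kl}=\frac{kl}{(d-1)^2}\sigma_b^2-\frac{l}{d-1}\sigma_{bc}$, $\sigma_{DD,kl}=\frac{kl}{(d-1)^2}\sigma_b^2$. *)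

theory Defs
  imports Complex_Main
begin

definition psi :: "real \<Rightarrow> nat \<Rightarrow> nat \<Rightarrow> real" where
  "psi \<theta> n k =
     (\<Prod>i=1..k. \<theta> + real i - 1) * (\<Prod>j=1..n-k. \<theta> + real j - 1)
     / (\<Prod>l=1..n. 2 * \<theta> + real l - 1)"

definition Fgen :: "real \<Rightarrow> nat \<Rightarrow> (nat \<Rightarrow> real) \<Rightarrow> (nat \<Rightarrow> real)
     \<Rightarrow> (nat \<Rightarrow> nat \<Rightarrow> real) \<Rightarrow> (nat \<Rightarrow> nat \<Rightarrow> real) \<Rightarrow> (nat \<Rightarrow> nat \<Rightarrow> real) \<Rightarrow> real" where
  "Fgen \<theta> d muC muD sCC sCD sDD =
     (\<Sum>k=0..d-1. real ((d-1) choose k) * psi \<theta> (d+1) (k+1) * (muC k - muD k))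
   + (\<Sum>k=0..d-1. \<Sum>l=0..d-1. real ((d-1) choose k) * real ((d-1) choose l) *
        (- psi \<theta> (2*d+1) (k+l+2) * (sCC k l - sCD k l)
         + psi \<theta> (2*d+1) (k+l+1) * (sDD k l - sCD k l)))"

definition F_pgg :: "real \<Rightarrow> nat \<Rightarrow> real \<Rightarrow> real \<Rightarrow> real \<Rightarrow> real \<Rightarrow> real \<Rightarrow> real" where
  "F_pgg \<theta> d mub muc sb2 sc2 sbc =
     Fgen \<theta> d
       (\<lambda>k. real k / real (d-1) * mub - muc)
       (\<lambda>k. real k / real (d-1) * mub)
       (\<lambda>k l. real k * real l / (real (d-1))^2 * sb2 + sc2 - (real k + real l) / real (d-1) * sbc)
       (\<lambda>k l. real k * real l / (real (d-1))^2 * sb2 - real l / real (d-1) * sbc)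
       (\<lambda>k l. real k * real l / (real (d-1))^2 * sb2)"

end

theory Submission imports Defs begin

definition PP :: "real \<Rightarrow> nat \<Rightarrow> real" where "PP t a = (\<Prod>i=1..a. t + real i - 1)"
definition QQ :: "real \<Rightarrow> nat \<Rightarrow> real" where "QQ t a = (\<Prod>i=1..a. 2*t + real i - 1)"
definition mm :: "real \<Rightarrow> nat \<Rightarrow> nat \<Rightarrow> real" where "mm t a b = PP t a * PP t b / QQ t (a+b)"

lemma PP_Suc: "PP t (Suc a) = PP t a * (t + real a)"
  unfolding PP_def by (simp add: prod.nat_ivl_Suc' mult.commute)
lemma QQ_Suc: "QQ t (Suc a) = QQ t a * (2*t + real a)"
  unfolding QQ_def by (simp add: prod.nat_ivl_Suc' mult.commute)
lemma PP_pos: "t > 0 \<Longrightarrow> PP t a > 0"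
  by (induction a) (auto simp: PP_Suc, simp add: PP_def)
lemma QQ_pos: "t > 0 \<Longrightarrow> QQ t a > 0"
  by (induction a) (auto simp: QQ_Suc, simp add: QQ_def)
lemma mm_pos: "t > 0 \<Longrightarrow> mm t a b > 0"
  unfolding mm_def using PP_pos QQ_pos by simp
lemma mm_sym: "mm t a b = mm t b a"
  unfolding mm_def by (simp add: add.commute mult.commute)
lemma mm_rec: assumes "t > 0" shows "mm t a b = mm t (Suc a) b + mm t a (Suc b)"
proof -
  have q: "QQ t (a+b) > 0" using QQ_pos assms by blast
  have h: "2*t + real (a+b) > 0" using assms by simp
  define X where "X = PP t a * PP t b"
  have "mm t (Suc a) b + mm t a (Suc b) = X * (t + real a) / (QQ t (a+b) * (2*t + real (a+b)))
       + X * (t + real b) / (QQ t (a+b) * (2*t + real (a+b)))"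
    unfolding mm_def X_def by (simp add: PP_Suc QQ_Suc ac_simps)
  also have "\<dots> = X * (2*t + real (a+b)) / (QQ t (a+b) * (2*t + real (a+b)))"
    by (simp add: add_divide_distrib[symmetric] algebra_simps)
  also have "\<dots> = mm t a b" unfolding mm_def X_def using h by simp
  finally show ?thesis by simp
qed
lemma psi_mm: "k \<le> n \<Longrightarrow> psi t n k = mm t k (n-k)"
  unfolding psi_def mm_def PP_def QQ_def by simp

lemma pascal_sum:
  "(\<Sum>k\<le>Suc n. real (Suc n choose k) * f k) =
   (\<Sum>k\<le>n. real (n choose k) * f k) + (\<Sum>k\<le>n. real (n choose k) * f (Suc k))"
proof -
  have "(\<Sum>k\<le>Suc n. real (Suc n choose k) * f k) =
        f 0 + (\<Sum>k\<le>n. real (Suc n choose Suc k) * f (Suc k))"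
    by (subst sum.atMost_Suc_shift) simp
  also have "\<dots> = f 0 + (\<Sum>k\<le>n. real (n choose Suc k) * f (Suc k))
       + (\<Sum>k\<le>n. real (n choose k) * f (Suc k))"
    by (simp add: sum.distrib distrib_right)
  also have "f 0 + (\<Sum>k\<le>n. real (n choose Suc k) * f (Suc k)) = (\<Sum>k\<le>Suc n. real (n choose k) * f k)"
    by (subst sum.atMost_Suc_shift) simp
  also have "\<dots> = (\<Sum>k\<le>n. real (n choose k) * f k)" by simp
  finally show ?thesis .
qed

lemma collapse: assumes "t > 0"
  shows "(\<Sum>k\<le>n. real (n choose k) * mm t (k+a) (n-k+b)) = mm t a b"
proof (induction n arbitrary: a b)
  case 0 then show ?case by simp
next
  case (Suc n)
  have "(\<Sum>k\<le>Suc n. real (Suc n choose k) * mm t (k+a) (Suc n-k+b)) =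
     (\<Sum>k\<le>n. real (n choose k) * mm t (k+a) (n-k+Suc b)) + (\<Sum>k\<le>n. real (n choose k) * mm t (k+Suc a) (n-k+b))"
    unfolding pascal_sum
    by (intro arg_cong2[where f="(+)"] sum.cong refl) (auto simp: Suc_diff_le)
  also have "\<dots> = mm t a b" unfolding Suc.IH[of a "Suc b"] Suc.IH[of "Suc a" b] mm_rec[OF assms, of a b] by simp
  finally show ?case .
qed

lemma collapse_k: assumes "t > 0"
  shows "(\<Sum>k\<le>n. real (n choose k) * real k * mm t (k+a) (n-k+b)) = real n * mm t (Suc a) b"
proof (cases n)
  case 0 then show ?thesis by simp
next
  case (Suc n')
  have "(\<Sum>k\<le>Suc n'. real (Suc n' choose k) * real k * mm t (k+a) (Suc n'-k+b))
     = (\<Sum>k\<le>n'. real (Suc n' choose Suc k) * real (Suc k) * mm t (Suc k+a) (Suc n'- Suc k+b))"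
    by (subst sum.atMost_Suc_shift) simp
  also have "\<dots> = (\<Sum>k\<le>n'. real (Suc n') * (real (n' choose k) * mm t (k+Suc a) (n'-k+b)))"
  proof (intro sum.cong refl)
    fix k assume "k \<in> {..n'}"
    have "real (Suc n' choose Suc k) * real (Suc k) = real (Suc n') * real (n' choose k)"
      using Suc_times_binomial_eq[of n' k] by (metis of_nat_mult)
    then show "real (Suc n' choose Suc k) * real (Suc k) * mm t (Suc k+a) (Suc n'- Suc k+b) =
       real (Suc n') * (real (n' choose k) * mm t (k+Suc a) (n'-k+b))" by simp
  qed
  also have "\<dots> = real (Suc n') * mm t (Suc a) b"
    by (simp only: sum_distrib_left[symmetric] collapse[OF assms, of n' "Suc a" b])
  finally show ?thesis using Suc by simp
qed

lemma F_formula: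
  assumes "d \<ge> 2" and t: "t > 0"
  shows "F_pgg t d mub muc sb2 sc2 sbc = mm t 2 1 * (sbc - sc2 - 2 * muc)"
proof -
  obtain n where dn: "d = Suc n" and n1: "n \<ge> 1" using assms(1) by (cases d) auto
  have iv: "{0..d-1} = {..n}" using dn by auto
  have nz: "real n \<noteq> 0" using n1 by simp
  define S1 where "S1 = (\<Sum>k\<le>n. real (n choose k) * psi t (d+1) (k+1))"
  define S2 where "S2 = (\<Sum>k\<le>n. \<Sum>l\<le>n. real (n choose k) * real (n choose l) * psi t (2*d+1) (k+l+2))"
  define S3 where "S3 = (\<Sum>k\<le>n. \<Sum>l\<le>n. real (n choose k) * real (n choose l) * real k * psi t (2*d+1) (k+l+2))"
  define S4 where "S4 = (\<Sum>k\<le>n. \<Sum>l\<le>n. real (n choose k) * real (n choose l) * real l * psi t (2*d+1) (k+l+1))"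
  have S1v: "S1 = mm t 1 1"
  proof -
    have "S1 = (\<Sum>k\<le>n. real (n choose k) * mm t (k+1) (n-k+1))"
      unfolding S1_def by (intro sum.cong refl) (auto simp: psi_mm dn Suc_diff_le)
    also have "\<dots> = mm t 1 1" by (rule collapse[OF t])
    finally show ?thesis .
  qed
  have in2: "(\<Sum>l\<le>n. real (n choose l) * psi t (2*d+1) (k+l+2)) = mm t (k+2) (n-k+1)" if "k \<le> n" for k
  proof -
    have "(\<Sum>l\<le>n. real (n choose l) * psi t (2*d+1) (k+l+2)) =
          (\<Sum>l\<le>n. real (n choose l) * mm t (l+(k+2)) (n-l+(n-k+1)))"
      using that by (intro sum.cong refl) (auto simp: psi_mm dn intro!: arg_cong2[where f="mm t"])
    also have "\<dots> = mm t (k+2) (n-k+1)" by (rule collapse[OF t])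
    finally show ?thesis .
  qed
  have S2v: "S2 = mm t 2 1"
  proof -
    have "S2 = (\<Sum>k\<le>n. real (n choose k) * mm t (k+2) (n-k+1))"
      unfolding S2_def
    proof (intro sum.cong refl)
      fix k assume "k \<in> {..n}"
      then show "(\<Sum>l\<le>n. real (n choose k) * real (n choose l) * psi t (2*d+1) (k+l+2)) =
        real (n choose k) * mm t (k+2) (n-k+1)"
        using in2[of k] by (simp add: sum_distrib_left[symmetric] mult.assoc)
    qed
    also have "\<dots> = mm t 2 1" by (rule collapse[OF t])
    finally show ?thesis .
  qed
  have S3v: "S3 = real n * mm t 3 1"
  proof -
    have "S3 = (\<Sum>k\<le>n. real (n choose k) * real k * mm t (k+2) (n-k+1))"
      unfolding S3_def
    proof (intro sum.cong refl)
      fix k assume "k \<in> {..n}"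
      then have kn: "k \<le> n" by simp
      show "(\<Sum>l\<le>n. real (n choose k) * real (n choose l) * real k * psi t (2*d+1) (k+l+2)) =
        real (n choose k) * real k * mm t (k+2) (n-k+1)"
        unfolding in2[OF kn, symmetric] sum_distrib_left by (simp add: ac_simps)
    qed
    also have "\<dots> = real n * mm t (Suc 2) 1" by (rule collapse_k[OF t])
    finally show ?thesis by simp
  qed
  have in4: "(\<Sum>l\<le>n. real (n choose l) * real l * psi t (2*d+1) (k+l+1)) = real n * mm t (k+2) (n-k+2)" if "k \<le> n" for k
  proof -
    have "(\<Sum>l\<le>n. real (n choose l) * real l * psi t (2*d+1) (k+l+1)) =
          (\<Sum>l\<le>n. real (n choose l) * real l * mm t (l+(k+1)) (n-l+(n-k+2)))"
      using that by (intro sum.cong refl) (auto simp: psi_mm dn intro!: arg_cong2[where f="mm t"])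
    also have "\<dots> = real n * mm t (Suc (k+1)) (n-k+2)" by (rule collapse_k[OF t])
    finally show ?thesis by simp
  qed
  have S4v: "S4 = real n * mm t 2 2"
  proof -
    have "S4 = (\<Sum>k\<le>n. real n * (real (n choose k) * mm t (k+2) (n-k+2)))"
      unfolding S4_def
    proof (intro sum.cong refl)
      fix k assume "k \<in> {..n}"
      then have kn: "k \<le> n" by simp
      have "real n * (real (n choose k) * mm t (k+2) (n-k+2)) = real (n choose k) * (real n * mm t (k+2) (n-k+2))" by simp
      then show "(\<Sum>l\<le>n. real (n choose k) * real (n choose l) * real l * psi t (2*d+1) (k+l+1)) =
        real n * (real (n choose k) * mm t (k+2) (n-k+2))"
        unfolding in4[OF kn, symmetric] sum_distrib_left by (simp add: ac_simps)
    qed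
    also have "\<dots> = real n * mm t 2 2" by (simp only: sum_distrib_left[symmetric] collapse[OF t])
    finally show ?thesis .
  qed
  have F1: "F_pgg t d mub muc sb2 sc2 sbc = - muc * S1 + (- sc2 * S2 + sbc / real n * S3 + sbc / real n * S4)"
  proof -
    have A: "(\<Sum>k=0..d-1. real ((d-1) choose k) * psi t (d+1) (k+1) *
        ((real k / real (d-1) * mub - muc) - real k / real (d-1) * mub)) = - muc * S1"
      unfolding iv S1_def by (simp add: sum_distrib_left dn ac_simps)
    have B: "(\<Sum>k=0..d-1. \<Sum>l=0..d-1. real ((d-1) choose k) * real ((d-1) choose l) *
        (- psi t (2*d+1) (k+l+2) * ((real k * real l / (real (d-1))^2 * sb2 + sc2 - (real k + real l) / real (d-1) * sbc)
           - (real k * real l / (real (d-1))^2 * sb2 - real l / real (d-1) * sbc))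
         + psi t (2*d+1) (k+l+1) * ((real k * real l / (real (d-1))^2 * sb2)
           - (real k * real l / (real (d-1))^2 * sb2 - real l / real (d-1) * sbc))))
       = - sc2 * S2 + sbc / real n * S3 + sbc / real n * S4"
    proof -
      have "(\<Sum>k=0..d-1. \<Sum>l=0..d-1. real ((d-1) choose k) * real ((d-1) choose l) *
        (- psi t (2*d+1) (k+l+2) * ((real k * real l / (real (d-1))^2 * sb2 + sc2 - (real k + real l) / real (d-1) * sbc)
           - (real k * real l / (real (d-1))^2 * sb2 - real l / real (d-1) * sbc))
         + psi t (2*d+1) (k+l+1) * ((real k * real l / (real (d-1))^2 * sb2)
           - (real k * real l / (real (d-1))^2 * sb2 - real l / real (d-1) * sbc))))
        = (\<Sum>k\<le>n. \<Sum>l\<le>n. - sc2 * (real (n choose k) * real (n choose l) * psi t (2*d+1) (k+l+2))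
            + sbc / real n * (real (n choose k) * real (n choose l) * real k * psi t (2*d+1) (k+l+2))
            + sbc / real n * (real (n choose k) * real (n choose l) * real l * psi t (2*d+1) (k+l+1)))"
        unfolding iv by (intro sum.cong refl) (simp add: dn algebra_simps diff_divide_distrib add_divide_distrib)
      also have "\<dots> = - sc2 * S2 + sbc / real n * S3 + sbc / real n * S4"
        unfolding S2_def S3_def S4_def by (simp only: sum.distrib sum_distrib_left)
      finally show ?thesis .
    qed
    show ?thesis unfolding F_pgg_def Fgen_def A B ..
  qed
  have r1: "mm t 1 1 = mm t 2 1 + mm t 1 2" using mm_rec[OF t, of 1 1] by (simp add: numeral_2_eq_2)
  have r2: "mm t 2 1 = mm t 3 1 + mm t 2 2" using mm_rec[OF t, of 2 1] by (simp add: numeral_2_eq_2 numeral_3_eq_3)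
  have r3: "mm t 1 2 = mm t 2 1" by (rule mm_sym)
  show ?thesis unfolding F1 S1v S2v S3v S4v r1 r3 using nz r2
    by (simp add: field_simps)
qed

theorem mainTheorem3:
  fixes \<theta> :: real and d :: nat
  assumes "d \<ge> 2" and "\<theta> > 0"
  shows "(\<forall>mub muc sb2 sc2 sbc :: real.
            F_pgg \<theta> d mub muc sb2 sc2 sbc > 0 \<longleftrightarrow> sbc - sc2 > 2 * muc)
       \<and> (\<forall>mub muc sb2 sbc s s' :: real. s < s' \<longrightarrow>
            F_pgg \<theta> d mub muc sb2 s' sbc < F_pgg \<theta> d mub muc sb2 s sbc)
       \<and> (\<forall>mub muc sb2 sc2 s s' :: real. s < s' \<longrightarrow>
            F_pgg \<theta> d mub muc sb2 sc2 s < F_pgg \<theta> d mub muc sb2 sc2 s')"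
proof -
  have p: "mm \<theta> 2 1 > 0" using mm_pos[OF assms(2)] .
  show ?thesis unfolding F_formula[OF assms] using p
    by (auto simp: zero_less_mult_iff mult_less_cancel_left_pos)
qed

end
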